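(* Let $\mathcal{P}$ be either $\mathcal{Q}_{a,b}$ (for some $a,b\ge1$) or $\mathcal{L}_a$ (for some $a\ge1$), and let $\nu$ be any permutation of $[a]$. Then the function $I\mapsto|I|$ is homomesic for $\mathcal{T}_\nu$ acting on $J(\mathcal{P})$.
   Context: $J(P)$ is the set of order ideals of a finite poset $P$. Toggle: $\sigma_x(I)=I\cup\{x\}$ if $x\notin I$ and $I\cup\{x\}\in J(P)$; $I\setminus\{x\}$ if $x\in I$ and $I\setminus\{x\}\in J(P)$; $I$ otherwise. For a chain $C=\{x_1<\dots<x_m\}$, $\sigma_C=\sigma_{x_1}\circ\cdots\circ\sigma_{x_m}$. $\mathcal{Q}_{a,b}=[a]\times[b]$ with componentwise order and columns $C_c=\{(c,j): j\in[b]\}$; $\mathcal{L}_a=\{(i,j)\in[a]^2:i\le j\}$ with componentwise order and columns $C_c=\{(c,j):c\le j\le a\}$. Comotion: $\mathcal{T}_\nu=\sigma_{C_{\nu(a)}}\circ\cdots\circ\sigma_{C_{\nu(1)}}$. A function on a finite set with a permutation $\tau$ is homomesic if its average over every $\tau$-orbit is the same constant. *)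

theory Defs
  imports Complex_Main "HOL-Combinatorics.Permutations"
begin

definition cleq :: "nat \<times> nat \<Rightarrow> nat \<times> nat \<Rightarrow> bool" where
  "cleq p q \<longleftrightarrow> fst p \<le> fst q \<and> snd p \<le> snd q"

definition Qposet :: "nat \<Rightarrow> nat \<Rightarrow> (nat \<times> nat) set" where
  "Qposet a b = {1..a} \<times> {1..b}"

definition Lposet :: "nat \<Rightarrow> (nat \<times> nat) set" where
  "Lposet a = {(i, j). 1 \<le> i \<and> i \<le> j \<and> j \<le> a}"

definition is_ideal :: "(nat \<times> nat) set \<Rightarrow> (nat \<times> nat) set \<Rightarrow> bool" where
  "is_ideal P I \<longleftrightarrow> I \<subseteq> P \<and> (\<forall>x\<in>I. \<forall>y\<in>P. cleq y x \<longrightarrow> y \<in> I)"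

definition ideals :: "(nat \<times> nat) set \<Rightarrow> (nat \<times> nat) set set" where
  "ideals P = {I. is_ideal P I}"

definition toggle :: "(nat \<times> nat) set \<Rightarrow> nat \<times> nat \<Rightarrow> (nat \<times> nat) set \<Rightarrow> (nat \<times> nat) set" where
  "toggle P x I =
     (if x \<notin> I \<and> is_ideal P (insert x I) then insert x I
      else if x \<in> I \<and> is_ideal P (I - {x}) then I - {x}
      else I)"

text \<open>Toggling a chain given as increasing list [x1,...,xm]:
  sigma_{x1} o ... o sigma_{xm} (so xm is toggled first).\<close>
definition chain_toggle :: "(nat \<times> nat) set \<Rightarrow> (nat \<times> nat) list \<Rightarrow> (nat \<times> nat) set \<Rightarrow> (nat \<times> nat) set" where
  "chain_toggle P xs = foldr (\<lambda>x f. toggle P x \<circ> f) xs id"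

definition column :: "(nat \<times> nat) set \<Rightarrow> nat \<Rightarrow> (nat \<times> nat) list" where
  "column P c = map (Pair c) (sorted_list_of_set {j. (c, j) \<in> P})"

text \<open>Comotion T_nu = sigma_{C_{nu(a)}} o ... o sigma_{C_{nu(1)}}.\<close>
definition comotion :: "(nat \<times> nat) set \<Rightarrow> nat \<Rightarrow> (nat \<Rightarrow> nat) \<Rightarrow> (nat \<times> nat) set \<Rightarrow> (nat \<times> nat) set" where
  "comotion P a \<nu> = fold (\<lambda>c f. chain_toggle P (column P c) \<circ> f) (map \<nu> [1..<a+1]) id"

definition orbit :: "('a \<Rightarrow> 'a) \<Rightarrow> 'a \<Rightarrow> 'a set" where
  "orbit \<tau> x = {(\<tau> ^^ n) x | n. True}"

definition homomesic :: "'a set \<Rightarrow> ('a \<Rightarrow> 'a) \<Rightarrow> ('a \<Rightarrow> real) \<Rightarrow> bool" where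
  "homomesic S \<tau> f \<longleftrightarrow>
     (\<exists>c. \<forall>x\<in>S. (\<Sum>y\<in>orbit \<tau> x. f y) / real (card (orbit \<tau> x)) = c)"

end

theory Submission
  imports Defs
begin


lemma orbit_subset:
  assumes "T ` V \<subseteq> V" "x \<in> V"
  shows "orbit T x \<subseteq> V"
proof -
  have "(T ^^ n) x \<in> V" for n using assms by (induction n) auto
  thus ?thesis unfolding orbit_def by auto
qed

lemma funpow_in:
  assumes "T ` V \<subseteq> V" "x \<in> V"
  shows "(T^^n) x \<in> V"
  using assms by (induction n) auto

lemma orbit_self: "x \<in> orbit T x"
  unfolding orbit_def by (auto intro: exI[of _ 0])

lemma funpow_inj_on:
  assumes "T ` V \<subseteq> V" "inj_on T V" "x \<in> V" "y \<in> V" "(T^^n) x = (T^^n) y"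
  shows "x = y"
  using assms(3-5)
proof (induction n arbitrary: x y)
  case (Suc n)
  have "(T^^n) x \<in> V" "(T^^n) y \<in> V"
    using funpow_in[OF assms(1)] Suc.prems by auto
  with Suc.prems(3) assms(2) have "(T^^n) x = (T^^n) y"
    by (auto dest: inj_onD)
  with Suc show ?case by blast
qed simp

lemma periodic:
  assumes "finite V" "T ` V \<subseteq> V" "inj_on T V" "x \<in> V"
  shows "\<exists>p>0. (T^^p) x = x"
proof -
  have "(\<lambda>n. (T^^n) x) ` {..card V} \<subseteq> V"
    using funpow_in[OF assms(2,4)] by auto
  hence "card ((\<lambda>n. (T^^n) x) ` {..card V}) \<le> card V"
    using assms(1) card_mono by blast
  hence "\<not> inj_on (\<lambda>n. (T^^n) x) {..card V}"
    using card_image by fastforce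
  then obtain i j where ij: "i \<le> card V" "j \<le> card V" "i \<noteq> j" "(T^^i) x = (T^^j) x"
    unfolding inj_on_def by auto
  { fix i j assume "i < j" "(T^^i) x = (T^^j) x"
    hence "(T^^i) x = (T^^i) ((T^^(j-i)) x)"
      by (metis funpow_add le_add_diff_inverse less_imp_le_nat o_apply)
    moreover have "(T^^(j-i)) x \<in> V"
      using funpow_in[OF assms(2,4)] by auto
    ultimately have "x = (T^^(j-i)) x"
      using funpow_inj_on[OF assms(2,3) assms(4)] by blast
    hence "\<exists>p>0. (T^^p) x = x" using \<open>i<j\<close> by (metis zero_less_diff)
  }
  with ij show ?thesis by (metis linorder_neqE_nat)
qed

lemma orbit_image:
  assumes "finite V" "T ` V \<subseteq> V" "inj_on T V" "x \<in> V"
  shows "T ` orbit T x = orbit T x"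
proof
  show "T ` orbit T x \<subseteq> orbit T x"
  proof
    fix z assume "z \<in> T ` orbit T x"
    then obtain n where "z = T ((T^^n) x)" unfolding orbit_def by auto
    hence "z = (T^^(Suc n)) x" by simp
    thus "z \<in> orbit T x" unfolding orbit_def by blast
  qed
next
  obtain p where p: "p > 0" "(T^^p) x = x" using periodic[OF assms] by blast
  show "orbit T x \<subseteq> T ` orbit T x"
  proof
    fix y assume "y \<in> orbit T x"
    then obtain n where y: "y = (T^^n) x" unfolding orbit_def by auto
    have "y = (T^^(n + p)) x" using p y by (simp add: funpow_add)
    also have "\<dots> = T ((T^^(n + p - 1)) x)" using p
      by (metis Suc_diff_1 add_gr_0 comp_apply funpow.simps(2))
    finally show "y \<in> T ` orbit T x" unfolding orbit_def by blast
  qed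
qed

lemma orbit_finite:
  assumes "finite V" "T ` V \<subseteq> V" "x \<in> V"
  shows "finite (orbit T x)"
  using orbit_subset[OF assms(2,3)] assms(1) finite_subset by blast

lemma orbit_sum_shift:
  assumes "finite V" "T ` V \<subseteq> V" "inj_on T V" "x \<in> V"
  shows "(\<Sum>y\<in>orbit T x. g (T y)) = (\<Sum>y\<in>orbit T x. (g y :: real))"
proof -
  have "inj_on T (orbit T x)"
    using assms(3) orbit_subset[OF assms(2,4)] inj_on_subset by blast
  hence "(\<Sum>y\<in>orbit T x. g (T y)) = (\<Sum>y\<in>T ` orbit T x. g y)"
    by (simp add: sum.reindex)
  thus ?thesis using orbit_image[OF assms] by simp
qed

definition HomC :: "'a set \<Rightarrow> ('a \<Rightarrow> 'a) \<Rightarrow> ('a \<Rightarrow> real) \<Rightarrow> real \<Rightarrow> bool" where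
  "HomC V T F C \<longleftrightarrow> (\<forall>x\<in>V. (\<Sum>y\<in>orbit T x. F y - C) = 0)"

lemma HomC_homomesic:
  assumes "finite V" "T ` V \<subseteq> V" "HomC V T F C"
  shows "homomesic V T F"
  unfolding homomesic_def
proof (intro exI[of _ C] ballI)
  fix x assume x: "x \<in> V"
  have fin: "finite (orbit T x)" using orbit_finite[OF assms(1,2) x] .
  have ne: "orbit T x \<noteq> {}" using orbit_self[of x T] by blast
  have "(\<Sum>y\<in>orbit T x. F y) - real (card (orbit T x)) * C = 0"
    using assms(3) x unfolding HomC_def by (simp add: sum_subtractf)
  moreover have "card (orbit T x) > 0" using fin ne card_gt_0_iff by blast
  ultimately show "(\<Sum>y\<in>orbit T x. F y) / real (card (orbit T x)) = C"
    by (simp add: field_simps)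
qed

lemma coboundary_HomC:
  assumes "finite V" "T ` V \<subseteq> V" "inj_on T V"
    and "\<And>y. y \<in> V \<Longrightarrow> F y - C = g y - g (T y)"
  shows "HomC V T F C"
  unfolding HomC_def
proof
  fix x assume x: "x \<in> V"
  have "(\<Sum>y\<in>orbit T x. F y - C) = (\<Sum>y\<in>orbit T x. g y - g (T y))"
    using orbit_subset[OF assms(2) x] assms(4) by (intro sum.cong) auto
  also have "\<dots> = 0" using orbit_sum_shift[OF assms(1-3) x, of g]
    by (simp add: sum_subtractf)
  finally show "(\<Sum>y\<in>orbit T x. F y - C) = 0" .
qed

lemma orbit_conj:
  assumes "T ` V \<subseteq> V" "\<And>y. y \<in> V \<Longrightarrow> T' (s y) = s (T y)" "y \<in> V"
  shows "orbit T' (s y) = s ` orbit T y"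
proof -
  have "(T'^^n) (s y) = s ((T^^n) y)" for n
  proof (induction n)
    case (Suc n)
    have "(T^^n) y \<in> V" using funpow_in[OF assms(1,3)] by auto
    thus ?case using Suc assms(2) by simp
  qed simp
  thus ?thesis unfolding orbit_def by auto
qed

lemma HomC_conj:
  assumes "finite V" "T ` V \<subseteq> V" "inj_on T V"
    and "s ` V \<subseteq> V" "inj_on s V"
    and "\<And>y. y \<in> V \<Longrightarrow> T' (s y) = s (T y)"
    and "\<And>y. y \<in> V \<Longrightarrow> F (s y) - F y = G (T y) - G y"
    and "HomC V T F C"
  shows "HomC V T' F C"
  unfolding HomC_def
proof
  fix x assume x: "x \<in> V"
  have "s ` V = V" using assms(1,4,5) by (meson endo_inj_surj)
  then obtain y where y: "y \<in> V" "x = s y" using x by auto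
  have O: "orbit T y \<subseteq> V" using orbit_subset[OF assms(2) y(1)] .
  have inj: "inj_on s (orbit T y)" using assms(5) O inj_on_subset by blast
  have "(\<Sum>z\<in>orbit T' x. F z - C) = (\<Sum>z\<in>orbit T y. F (s z) - C)"
    using orbit_conj[where T=T and T'=T' and s=s and V=V, OF assms(2,6) y(1)] y inj by (simp add: sum.reindex)
  also have "\<dots> = (\<Sum>z\<in>orbit T y. (F z - C) + (G (T z) - G z))"
    using O assms(7) by (intro sum.cong) force+
  also have "\<dots> = (\<Sum>z\<in>orbit T y. F z - C) + ((\<Sum>z\<in>orbit T y. G (T z)) - (\<Sum>z\<in>orbit T y. G z))"
    by (simp add: sum.distrib sum_subtractf)
  also have "\<dots> = 0"
    using assms(8) y(1) orbit_sum_shift[OF assms(1-3) y(1), of G] unfolding HomC_def by simp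
  finally show "(\<Sum>z\<in>orbit T' x. F z - C) = 0" .
qed

lemma homomesic_transfer:
  assumes "T ` V \<subseteq> V" "inj_on d V" "d ` V = S"
    and "\<And>y. y \<in> V \<Longrightarrow> T' (d y) = d (T y)"
    and "\<And>y. y \<in> V \<Longrightarrow> f (d y) = F y"
    and "homomesic V T F"
  shows "homomesic S T' f"
proof -
  obtain C where C: "\<forall>x\<in>V. (\<Sum>y\<in>orbit T x. F y) / real (card (orbit T x)) = C"
    using assms(6) unfolding homomesic_def by blast
  show ?thesis unfolding homomesic_def
  proof (intro exI[of _ C] ballI)
    fix x assume "x \<in> S"
    then obtain y where y: "y \<in> V" "x = d y" using assms(3) by auto
    have O: "orbit T y \<subseteq> V" using orbit_subset[OF assms(1) y(1)] .
    have inj: "inj_on d (orbit T y)" using assms(2) O inj_on_subset by blast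
    have e: "orbit T' x = d ` orbit T y" using orbit_conj[where T=T and T'=T' and s=d and V=V, OF assms(1,4) y(1)] y by simp
    have "(\<Sum>z\<in>orbit T' x. f z) = (\<Sum>z\<in>orbit T y. F z)"
      using e inj O assms(5) by (simp add: sum.reindex) (intro sum.cong; auto)
    moreover have "card (orbit T' x) = card (orbit T y)" using e inj card_image by auto
    ultimately show "(\<Sum>z\<in>orbit T' x. f z) / real (card (orbit T' x)) = C"
      using C y by simp
  qed
qed


definition okl :: "nat \<Rightarrow> nat list \<Rightarrow> bool" where
  "okl a L \<longleftrightarrow> distinct L \<and> set L \<subseteq> {1..a}"

definition ins :: "nat \<Rightarrow> nat list \<Rightarrow> nat list" where
  "ins m xs = concat (map (\<lambda>z. if z = m then [m, Suc m] else [z]) xs)"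

lemma ins_append[simp]: "ins m (xs @ ys) = ins m xs @ ins m ys"
  by (simp add: ins_def)

lemma ins_Cons: "ins m (x # xs) = (if x = m then [m, Suc m] else [x]) @ ins m xs"
  by (simp add: ins_def)

lemma ins_Nil[simp]: "ins m [] = []" by (simp add: ins_def)

lemma ins_notin: "m \<notin> set xs \<Longrightarrow> ins m xs = xs"
  by (induction xs) (auto simp: ins_Cons)

lemma set_ins: "set (ins m xs) = set xs \<union> (if m \<in> set xs then {Suc m} else {})"
  by (induction xs) (auto simp: ins_Cons)

lemma distinct_ins: "distinct xs \<Longrightarrow> Suc m \<notin> set xs \<Longrightarrow> distinct (ins m xs)"
  by (induction xs) (auto simp: ins_Cons set_ins)

lemma okl_ins: "okl m xs \<Longrightarrow> okl (Suc m) (ins m xs)"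
proof -
  assume a: "okl m xs"
  hence "Suc m \<notin> set xs" by (auto simp: okl_def)
  thus ?thesis using a unfolding okl_def using distinct_ins[of xs m] set_ins[of m xs] by auto
qed

lemma move_right:
  assumes swap: "\<And>u v x y. okl a (u@[x,y]@v) \<Longrightarrow> x+2 \<le> y \<or> y+2 \<le> x \<Longrightarrow> Q (u@[x,y]@v) \<Longrightarrow> Q (u@[y,x]@v)"
  shows "okl a (L@[z]@Z@R) \<Longrightarrow> \<forall>y\<in>set Z. y+2 \<le> z \<or> z+2 \<le> y \<Longrightarrow> Q (L@[z]@Z@R) \<Longrightarrow> Q (L@Z@[z]@R)"
proof (induction Z arbitrary: L)
  case (Cons y Z)
  have "Q ((L@[y])@[z]@Z@R)"
    using swap[where u=L and v="Z@R" and x=z and y=y] Cons.prems by auto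
  moreover have "okl a ((L@[y])@[z]@Z@R)" using Cons.prems(1) unfolding okl_def by auto
  ultimately show ?case using Cons.IH[of "L@[y]"] Cons.prems(2) by simp
qed simp

lemma move_left:
  assumes swap: "\<And>u v x y. okl a (u@[x,y]@v) \<Longrightarrow> x+2 \<le> y \<or> y+2 \<le> x \<Longrightarrow> Q (u@[x,y]@v) \<Longrightarrow> Q (u@[y,x]@v)"
  shows "okl a (L@Z@[z]@R) \<Longrightarrow> \<forall>y\<in>set Z. y+2 \<le> z \<or> z+2 \<le> y \<Longrightarrow> Q (L@Z@[z]@R) \<Longrightarrow> Q (L@[z]@Z@R)"
proof (induction Z arbitrary: R rule: rev_induct)
  case (snoc y Z)
  have "Q (L@Z@[z]@[y]@R)"
    using swap[where u="L@Z" and v=R and x=y and y=z] snoc.prems by auto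
  moreover have "okl a (L@Z@[z]@([y]@R))" using snoc.prems(1) unfolding okl_def by auto
  ultimately have "Q (L@[z]@Z@[y]@R)" using snoc.IH[of "[y]@R"] snoc.prems(2) by simp
  thus ?case by simp
qed simp

lemma reach:
  fixes Q :: "nat list \<Rightarrow> bool"
  assumes rot: "\<And>u v. okl a (u@v) \<Longrightarrow> Q (u@v) \<Longrightarrow> Q (v@u)"
  and swap: "\<And>u v x y. okl a (u@[x,y]@v) \<Longrightarrow> x+2 \<le> y \<or> y+2 \<le> x \<Longrightarrow> Q (u@[x,y]@v) \<Longrightarrow> Q (u@[y,x]@v)"
  and base: "Q [1..<a+1]"
  and w: "distinct w" "set w = {1..a}"
  shows "Q w"
  using assms
proof (induction a arbitrary: Q w)
  case 0
  then show ?case by simp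
next
  case (Suc m)
  show ?case
  proof (cases "m = 0")
    case True
    have "card (set w) = 1" using Suc.prems(5) True by simp
    hence "length w = 1" using distinct_card[OF Suc.prems(4)] by simp
    then obtain x where "w = [x]" by (cases w) auto
    with Suc.prems(5) True have "w = [1]" by simp
    then show ?thesis using Suc.prems(3) True by simp
  next
    case False
    let ?a = "Suc m"
    define Q' where "Q' = (\<lambda>xs. Q (ins m xs))"
    have rot': "Q' (v@u)" if "okl m (u@v)" "Q' (u@v)" for u v
    proof -
      have "okl ?a (ins m u @ ins m v)" using okl_ins[OF that(1)] by simp
      thus ?thesis using that(2) Suc.prems(1) unfolding Q'_def by simp
    qed
    have swap': "Q' (u@[y,x]@v)" if "okl m (u@[x,y]@v)" "x+2 \<le> y \<or> y+2 \<le> x" "Q' (u@[x,y]@v)" for u v x y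
    proof -
      have ok: "okl ?a (ins m (u@[x,y]@v))" using okl_ins[OF that(1)] .
      have xy: "x \<le> m" "y \<le> m" "x \<ge> 1" "y \<ge> 1" using that(1) unfolding okl_def by auto
      consider "x = m" | "y = m" | "x \<noteq> m \<and> y \<noteq> m" by blast
      then show ?thesis
      proof cases
        case 1
        hence yne: "y \<noteq> m" using that(2) by auto
        have "Q (ins m u @ [m, ?a, y] @ ins m v)" using that(3) 1 yne unfolding Q'_def by (simp add: ins_Cons)
        hence "Q ((ins m u @ [m]) @ [?a, y] @ ins m v)" by simp
        moreover have "okl ?a ((ins m u @ [m]) @ [?a, y] @ ins m v)" using ok 1 yne by (simp add: ins_Cons)
        moreover have "?a + 2 \<le> y \<or> y + 2 \<le> ?a" using xy that(2) 1 by auto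
        ultimately have "Q ((ins m u @ [m]) @ [y, ?a] @ ins m v)"
          using Suc.prems(2) by blast
        hence "Q (ins m u @ [m, y] @ [?a] @ ins m v)" by simp
        moreover have "okl ?a (ins m u @ [m, y] @ ([?a] @ ins m v))"
          using ok 1 yne unfolding okl_def by (auto simp: ins_Cons)
        ultimately have "Q (ins m u @ [y, m] @ [?a] @ ins m v)"
          using Suc.prems(2) that(2) 1 by blast
        thus ?thesis unfolding Q'_def using 1 yne by (simp add: ins_Cons)
      next
        case 2
        hence xne: "x \<noteq> m" using that(2) by auto
        have "Q (ins m u @ [x, m] @ ([?a] @ ins m v))" using that(3) 2 xne unfolding Q'_def by (simp add: ins_Cons)
        moreover have "okl ?a (ins m u @ [x, m] @ ([?a] @ ins m v))" using ok 2 xne by (simp add: ins_Cons)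
        ultimately have "Q (ins m u @ [m, x] @ ([?a] @ ins m v))"
          using Suc.prems(2) that(2) 2 by blast
        hence "Q ((ins m u @ [m]) @ [x, ?a] @ ins m v)" by simp
        moreover have "okl ?a ((ins m u @ [m]) @ [x, ?a] @ ins m v)"
          using ok 2 xne unfolding okl_def by (auto simp: ins_Cons)
        moreover have "x + 2 \<le> ?a \<or> ?a + 2 \<le> x" using xy that(2) 2 by auto
        ultimately have "Q ((ins m u @ [m]) @ [?a, x] @ ins m v)"
          using Suc.prems(2) by blast
        thus ?thesis unfolding Q'_def using 2 xne by (simp add: ins_Cons)
      next
        case 3
        have "Q (ins m u @ [x, y] @ ins m v)" using that(3) 3 unfolding Q'_def by (simp add: ins_Cons)
        moreover have "okl ?a (ins m u @ [x, y] @ ins m v)" using ok 3 by (simp add: ins_Cons)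
        ultimately have "Q (ins m u @ [y, x] @ ins m v)" using Suc.prems(2) that(2) by blast
        thus ?thesis unfolding Q'_def using 3 by (simp add: ins_Cons)
      qed
    qed
    have base': "Q' [1..<m+1]"
    proof -
      have "[1..<m+1] = [1..<m] @ [m]" using False by simp
      hence "ins m [1..<m+1] = [1..<m] @ [m, ?a]" by (simp add: ins_notin ins_Cons)
      also have "\<dots> = [1..<?a+1]" using False by simp
      finally show ?thesis unfolding Q'_def using Suc.prems(3) by simp
    qed
    have aw: "?a \<in> set w" using Suc.prems(5) by auto
    then obtain u v where uv: "w = u @ [?a] @ v" by (metis append_Cons append_Nil in_set_conv_decomp)
    have w0: "distinct (u@v)" "set (u@v) = {1..m}"
    proof -
      show "distinct (u@v)" using Suc.prems(4) uv by simp
      have "set (u@v) = set w - {?a}" using Suc.prems(4) uv by auto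
      also have "\<dots> = {1..m}" using Suc.prems(5) by auto
      finally show "set (u@v) = {1..m}" .
    qed
    have Qw0: "Q (ins m (u@v))"
      using Suc.IH[of Q' "u@v", OF rot' swap' base' w0] unfolding Q'_def by simp
    have mw0: "m \<in> set (u@v)" using w0 False by auto
    have okw: "okl ?a w" using Suc.prems(4,5) unfolding okl_def by auto
    have far: "\<forall>y\<in>set Z. y+2 \<le> ?a \<or> ?a+2 \<le> y" if "set Z \<subseteq> set (u@v)" "m \<notin> set Z" for Z
    proof
      fix y assume "y \<in> set Z"
      hence "y \<in> {1..m}" "y \<noteq> m" using that w0 by auto
      thus "y+2 \<le> ?a \<or> ?a+2 \<le> y" by auto
    qed
    have MR: "Q (L@Z@[?a]@R)" if "okl ?a (L@[?a]@Z@R)" "\<forall>y\<in>set Z. y+2 \<le> ?a \<or> ?a+2 \<le> y" "Q (L@[?a]@Z@R)" for L Z R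
      using move_right[where a="?a" and Q=Q, OF Suc.prems(2) that] by blast
    have MLe: "Q (L@[?a]@Z@R)" if "okl ?a (L@Z@[?a]@R)" "\<forall>y\<in>set Z. y+2 \<le> ?a \<or> ?a+2 \<le> y" "Q (L@Z@[?a]@R)" for L Z R
      using move_left[where a="?a" and Q=Q, OF Suc.prems(2) that] by blast
    have RT: "Q (v@u)" if "okl ?a (u@v)" "Q (u@v)" for u v
      using Suc.prems(1)[OF that] .
    show ?thesis
    proof (cases "m \<in> set u")
      case True
      then obtain u1 u2 where u: "u = u1 @ [m] @ u2" by (metis append_Cons append_Nil in_set_conv_decomp)
      have nm: "m \<notin> set u1" "m \<notin> set u2" "m \<notin> set v" using w0(1) u by auto
      have "ins m (u@v) = u1 @ [m, ?a] @ u2 @ v" using u nm by (simp add: ins_notin ins_Cons)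
      hence "Q ((u1 @ [m]) @ [?a] @ u2 @ v)" using Qw0 by simp
      moreover have "okl ?a ((u1 @ [m]) @ [?a] @ u2 @ v)" using okw uv u unfolding okl_def by auto
      moreover have "\<forall>y\<in>set u2. y+2 \<le> ?a \<or> ?a+2 \<le> y" using far[of u2] u nm by auto
      ultimately have "Q ((u1 @ [m]) @ u2 @ [?a] @ v)" using MR by blast
      thus ?thesis using uv u by simp
    next
      case False
      with mw0 obtain v1 v2 where v: "v = v1 @ [m] @ v2" by (metis append_Cons append_Nil in_set_conv_decomp Un_iff set_append)
      have nm: "m \<notin> set u" "m \<notin> set v1" "m \<notin> set v2" using w0(1) v False by auto
      have e: "ins m (u@v) = (u @ v1) @ [m, ?a] @ v2" using v nm by (simp add: ins_notin ins_Cons)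
      have ok1: "okl ?a ((u @ v1) @ [m, ?a] @ v2)" using okw uv v unfolding okl_def by auto
      have "Q ([m, ?a] @ v2 @ (u @ v1))" using RT[OF ok1] Qw0 e by simp
      hence "Q ([m] @ ([?a] @ v2 @ u @ v1))" by simp
      moreover have "okl ?a ([m] @ ([?a] @ v2 @ u @ v1))" using ok1 unfolding okl_def by auto
      ultimately have "Q (([?a] @ v2 @ u @ v1) @ [m])" using RT by blast
      hence "Q ([] @ [?a] @ (v2 @ u @ v1) @ [m])" by simp
      moreover have "\<forall>y\<in>set (v2 @ u @ v1). y+2 \<le> ?a \<or> ?a+2 \<le> y" using far[of "v2 @ u @ v1"] nm v by auto
      moreover have "okl ?a ([] @ [?a] @ (v2 @ u @ v1) @ [m])" using ok1 unfolding okl_def by auto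
      ultimately have "Q ([] @ (v2 @ u @ v1) @ [?a] @ [m])" using MR by blast
      hence "Q (v2 @ (u @ v1 @ [?a, m]))" by simp
      moreover have "okl ?a (v2 @ (u @ v1 @ [?a, m]))" using ok1 unfolding okl_def by auto
      ultimately have "Q ((u @ v1 @ [?a, m]) @ v2)" using RT by blast
      hence "Q (u @ v1 @ [?a] @ [m] @ v2)" by simp
      moreover have "okl ?a (u @ v1 @ [?a] @ ([m] @ v2))" using ok1 unfolding okl_def by auto
      moreover have "\<forall>y\<in>set v1. y+2 \<le> ?a \<or> ?a+2 \<le> y" using far[of v1] nm v by auto
      ultimately have "Q (u @ [?a] @ v1 @ ([m] @ v2))" using MLe by blast
      thus ?thesis using uv v by simp
    qed
  qed
qed


lemma fold_comp_id:
  fixes h :: "'b \<Rightarrow> 'b"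
  shows "fold (\<lambda>c f. g c \<circ> f) w h = fold (\<lambda>c f. g c \<circ> f) w id \<circ> h"
proof (induction w arbitrary: h)
  case (Cons c w)
  show ?case using Cons.IH[of "g c \<circ> h"] Cons.IH[of "g c"] by (simp add: comp_assoc)
qed simp

lemma sum_upd:
  assumes "finite A" "c \<in> A"
  shows "(\<Sum>x\<in>A. real ((n(c := v)) x)) = (\<Sum>x\<in>A. real (n x)) - real (n c) + real v"
proof -
  have "(\<Sum>x\<in>A. real ((n(c := v)) x)) = real v + (\<Sum>x\<in>A - {c}. real ((n(c := v)) x))"
    using assms by (simp add: sum.remove)
  also have "(\<Sum>x\<in>A - {c}. real ((n(c := v)) x)) = (\<Sum>x\<in>A - {c}. real (n x))"
    by (intro sum.cong) auto
  also have "\<dots> = (\<Sum>x\<in>A. real (n x)) - real (n c)"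
    using assms by (simp add: sum.remove)
  finally show ?thesis by simp
qed

locale colsys =
  fixes a :: nat and U Lo :: "nat \<Rightarrow> (nat \<Rightarrow> nat) \<Rightarrow> nat" and V :: "(nat \<Rightarrow> nat) set"
  assumes finV: "finite V"
  and upd: "\<And>n c m. n \<in> V \<Longrightarrow> c \<in> {1..a} \<Longrightarrow> n(c := m) \<in> V \<longleftrightarrow> Lo c n \<le> m \<and> m \<le> U c n"
  and locU: "\<And>c n n'. n (c-1) = n' (c-1) \<Longrightarrow> U c n = U c n'"
  and locL: "\<And>c n n'. n (c+1) = n' (c+1) \<Longrightarrow> Lo c n = Lo c n'"
begin

definition tau :: "nat \<Rightarrow> (nat \<Rightarrow> nat) \<Rightarrow> (nat \<Rightarrow> nat)" where
  "tau c n = n(c := if n c < U c n then Suc (n c) else Lo c n)"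

definition TT :: "nat list \<Rightarrow> (nat \<Rightarrow> nat) \<Rightarrow> (nat \<Rightarrow> nat)" where
  "TT w = fold (\<lambda>c f. tau c \<circ> f) w id"

definition F :: "(nat \<Rightarrow> nat) \<Rightarrow> real" where
  "F n = (\<Sum>c\<in>{1..a}. real (n c))"

lemma bounds: "n \<in> V \<Longrightarrow> c \<in> {1..a} \<Longrightarrow> Lo c n \<le> n c \<and> n c \<le> U c n"
  using upd[of n c "n c"] by simp

lemma tau_in: "n \<in> V \<Longrightarrow> c \<in> {1..a} \<Longrightarrow> tau c n \<in> V"
proof -
  assume nV: "n \<in> V" and c: "c \<in> {1..a}"
  have b: "Lo c n \<le> n c" "n c \<le> U c n" using bounds[OF nV c] by auto
  show ?thesis unfolding tau_def upd[OF nV c] using b by auto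
qed

lemma tau_in': "c \<in> {1..a} \<Longrightarrow> tau c ` V \<subseteq> V"
  using tau_in by auto

lemma tau_other: "d \<noteq> c \<Longrightarrow> tau c n d = n d"
  unfolding tau_def by simp

lemma tau_inj: "c \<in> {1..a} \<Longrightarrow> inj_on (tau c) V"
proof (rule inj_onI)
  fix n n' assume c: "c \<in> {1..a}" and nV: "n \<in> V" "n' \<in> V" and e: "tau c n = tau c n'"
  have oth: "n d = n' d" if "d \<noteq> c" for d using tau_other[OF that, of n] tau_other[OF that, of n'] e by simp
  have "c - 1 \<noteq> c" "c + 1 \<noteq> c" using c by auto
  hence UU: "U c n = U c n'" and LL: "Lo c n = Lo c n'" using oth locU locL by blast+
  have b1: "Lo c n \<le> n c" "n c \<le> U c n" and b2: "Lo c n' \<le> n' c" "n' c \<le> U c n'" using bounds nV c by auto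
  have "tau c n c = tau c n' c" using e by simp
  hence "n c = n' c" unfolding tau_def using UU LL b1 b2
    by (auto split: if_splits)
  thus "n = n'" using oth by (intro ext) (metis)
qed

lemma tau_comm:
  assumes "c + 2 \<le> d \<or> d + 2 \<le> c"
  shows "tau c (tau d n) = tau d (tau c n)"
proof -
  have f1: "U c (tau d n) = U c n" by (rule locU) (use assms in \<open>auto simp: tau_other\<close>)
  have f2: "Lo c (tau d n) = Lo c n" by (rule locL) (use assms in \<open>auto simp: tau_other\<close>)
  have f3: "U d (tau c n) = U d n" by (rule locU) (use assms in \<open>auto simp: tau_other\<close>)
  have f4: "Lo d (tau c n) = Lo d n" by (rule locL) (use assms in \<open>auto simp: tau_other\<close>)
  have cd: "c \<noteq> d" using assms by auto
  have f5: "tau d n c = n c" "tau c n d = n d" using cd by (auto simp: tau_other)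
  define X where "X = (if n d < U d n then Suc (n d) else Lo d n)"
  define Y where "Y = (if n c < U c n then Suc (n c) else Lo c n)"
  have "tau c (tau d n) = (tau d n)(c := Y)"
    unfolding tau_def[of c "tau d n"] Y_def f1 f2 f5 ..
  also have "\<dots> = n(d := X, c := Y)" unfolding tau_def X_def ..
  also have "\<dots> = n(c := Y, d := X)" using cd by (simp add: fun_upd_twist)
  also have "\<dots> = (tau c n)(d := X)" unfolding tau_def Y_def ..
  also have "\<dots> = tau d (tau c n)"
    unfolding tau_def[of d "tau c n"] X_def f3 f4 f5 ..
  finally show ?thesis .
qed

lemma TT_Nil[simp]: "TT [] = id" unfolding TT_def by simp

lemma TT_Cons: "TT (c # w) = TT w \<circ> tau c"
  unfolding TT_def using fold_comp_id[of tau w "tau c"] by simp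

lemma TT_snoc: "TT (w @ [c]) = tau c \<circ> TT w"
  unfolding TT_def by simp

lemma TT_append: "TT (u @ v) = TT v \<circ> TT u"
  by (induction u) (auto simp: TT_Cons)

lemma TT_in: "set w \<subseteq> {1..a} \<Longrightarrow> n \<in> V \<Longrightarrow> TT w n \<in> V"
  by (induction w arbitrary: n) (auto simp: TT_Cons tau_in)

lemma TT_in': "set w \<subseteq> {1..a} \<Longrightarrow> TT w ` V \<subseteq> V"
  using TT_in by auto

lemma TT_inj: "set w \<subseteq> {1..a} \<Longrightarrow> inj_on (TT w) V"
proof (induction w)
  case (Cons c w)
  hence "inj_on (TT w) V" "inj_on (tau c) V" "c \<in> {1..a}" using tau_inj by auto
  moreover have "tau c ` V \<subseteq> V" using tau_in' \<open>c \<in> {1..a}\<close> .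
  ultimately have "inj_on (TT w) (tau c ` V)" using inj_on_subset by blast
  thus ?case unfolding TT_Cons using comp_inj_on \<open>inj_on (tau c) V\<close> by blast
qed (simp add: TT_def)

lemma TT_other: "c \<notin> set w \<Longrightarrow> TT w n c = n c"
  by (induction w arbitrary: n) (auto simp: TT_Cons tau_other)

lemma F_tau: "c \<in> {1..a} \<Longrightarrow> F (tau c n) - F n = real (tau c n c) - real (n c)"
  unfolding F_def tau_def using sum_upd[of "{1..a}" c n] by simp

definition Good :: "real \<Rightarrow> nat list \<Rightarrow> bool" where
  "Good C w \<longleftrightarrow> (okl a w \<longrightarrow> HomC V (TT w) F C)"

lemma rot1:
  assumes "okl a (c # w)" "HomC V (TT (c # w)) F C"
  shows "HomC V (TT (w @ [c])) F C"
proof -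
  have c: "c \<in> {1..a}" "c \<notin> set w" and w: "set w \<subseteq> {1..a}" using assms(1) unfolding okl_def by auto
  have sw: "set (c#w) \<subseteq> {1..a}" using c w by auto
  show ?thesis
  proof (rule HomC_conj[where T="TT (c#w)" and s="tau c" and G="\<lambda>n. real (n c)"])
    show "finite V" by (rule finV)
    show "TT (c # w) ` V \<subseteq> V" using TT_in'[OF sw] .
    show "inj_on (TT (c # w)) V" using TT_inj[OF sw] .
    show "tau c ` V \<subseteq> V" using tau_in'[OF c(1)] .
    show "inj_on (tau c) V" using tau_inj[OF c(1)] .
    show "TT (w @ [c]) (tau c y) = tau c (TT (c # w) y)" for y
      by (simp add: TT_snoc TT_Cons)
    show "F (tau c y) - F y = real (TT (c # w) y c) - real (y c)" for y
      using F_tau[OF c(1)] TT_other[OF c(2)] by (simp add: TT_Cons)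
    show "HomC V (TT (c # w)) F C" by fact
  qed
qed

lemma rot:
  "okl a (u @ v) \<Longrightarrow> HomC V (TT (u @ v)) F C \<Longrightarrow> HomC V (TT (v @ u)) F C"
proof (induction u arbitrary: v)
  case (Cons c u)
  have "HomC V (TT ((u @ v) @ [c])) F C" using rot1[of c "u@v"] Cons.prems by simp
  moreover have "okl a (u @ (v @ [c]))" using Cons.prems(1) unfolding okl_def by auto
  ultimately have "HomC V (TT ((v @ [c]) @ u)) F C" using Cons.IH[of "v @ [c]"] by simp
  thus ?case by simp
qed simp

lemma swapT:
  assumes "x + 2 \<le> y \<or> y + 2 \<le> x"
  shows "TT (u @ [x, y] @ v) = TT (u @ [y, x] @ v)"
proof -
  have "TT [x, y] = TT [y, x]"
    by (rule ext) (simp add: TT_Cons tau_comm[OF assms])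
  thus ?thesis by (simp only: TT_append)
qed

lemma all_orders:
  assumes "HomC V (TT [1..<a+1]) F C" "distinct w" "set w = {1..a}"
  shows "HomC V (TT w) F C"
proof -
  have "Good C w"
  proof (rule reach[where Q="Good C" and a=a])
    show "Good C (v @ u)" if "okl a (u @ v)" "Good C (u @ v)" for u v
      using that rot unfolding Good_def okl_def by auto
    show "Good C (u @ [y, x] @ v)" if "okl a (u @ [x, y] @ v)" "x + 2 \<le> y \<or> y + 2 \<le> x" "Good C (u @ [x, y] @ v)" for u v x y
      using that swapT unfolding Good_def okl_def by auto
    show "Good C [1..<a + 1]" using assms(1) unfolding Good_def by simp
  qed (use assms in auto)
  thus ?thesis using assms unfolding Good_def okl_def by auto
qed

end


lemma chain_toggle_Cons: "chain_toggle P (x # xs) I = toggle P x (chain_toggle P xs I)"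
  unfolding chain_toggle_def by simp

lemma chain_toggle_Nil: "chain_toggle P [] I = I"
  unfolding chain_toggle_def by simp

locale colgen =
  fixes P :: "(nat \<times> nat) set" and c s len lo up :: nat and R :: "(nat \<times> nat) set"
  assumes Rc: "\<And>x. x \<in> R \<Longrightarrow> fst x \<noteq> c"
  and colP: "\<And>j. (c, j) \<in> P \<longleftrightarrow> s \<le> j \<and> j < s + len"
  and idl: "\<And>m. is_ideal P (R \<union> {(c, j) | j. s \<le> j \<and> j < s + m}) \<longleftrightarrow> lo \<le> m \<and> m \<le> up"
begin

definition D :: "nat \<Rightarrow> (nat \<times> nat) set" where
  "D m = R \<union> {(c, j) | j. s \<le> j \<and> j < s + m}"

lemma D_ideal: "is_ideal P (D m) \<longleftrightarrow> lo \<le> m \<and> m \<le> up"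
  unfolding D_def by (rule idl)

lemma memD: "(c, j) \<in> D m \<longleftrightarrow> s \<le> j \<and> j < s + m"
  unfolding D_def using Rc by force

lemma up_len: assumes "lo \<le> up" shows "up \<le> len"
proof (rule ccontr)
  assume "\<not> up \<le> len"
  hence "(c, s + len) \<in> D up" using memD by auto
  moreover have "is_ideal P (D up)" using D_ideal assms by simp
  ultimately have "(c, s + len) \<in> P" unfolding is_ideal_def by blast
  thus False using colP by simp
qed

lemma step:
  assumes m: "lo \<le> m" "m \<le> up" and j: "s \<le> j"
  shows "toggle P (c, j) (D m) = D (if j = s + m \<and> m < up then Suc m
                                     else if Suc j = s + m \<and> lo < m then m - 1 else m)"
proof -
  have Dm: "is_ideal P (D m)" using D_ideal m by simp
  show ?thesis
  proof (cases "j < s + m")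
    case False
    hence notin: "(c, j) \<notin> D m" using memD by simp
    show ?thesis
    proof (cases "j = s + m")
      case True
      have ins: "insert (c, j) (D m) = D (Suc m)" unfolding D_def using True by auto
      show ?thesis unfolding toggle_def ins using notin D_ideal[of "Suc m"] m True by auto
    next
      case False
      have "\<not> is_ideal P (insert (c, j) (D m))"
      proof
        assume id: "is_ideal P (insert (c, j) (D m))"
        hence "(c, j) \<in> P" unfolding is_ideal_def by auto
        hence "(c, s + m) \<in> P" using colP \<open>\<not> j < s + m\<close> False by auto
        moreover have "cleq (c, s + m) (c, j)" unfolding cleq_def using \<open>\<not> j < s + m\<close> by auto
        ultimately have "(c, s + m) \<in> insert (c, j) (D m)" using id unfolding is_ideal_def by blast
        thus False using memD False by simp
      qed
      thus ?thesis unfolding toggle_def using notin False \<open>\<not> j < s + m\<close> by auto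
    qed
  next
    case True
    hence isin: "(c, j) \<in> D m" using memD j by simp
    show ?thesis
    proof (cases "Suc j = s + m")
      case True
      have rem: "D m - {(c, j)} = D (m - 1)" unfolding D_def using True Rc by force
      show ?thesis unfolding toggle_def rem using isin D_ideal[of "m - 1"] m True by auto
    next
      case False
      have "\<not> is_ideal P (D m - {(c, j)})"
      proof
        assume id: "is_ideal P (D m - {(c, j)})"
        have "(c, Suc j) \<in> D m - {(c, j)}" using memD j \<open>j < s + m\<close> False by auto
        moreover have "(c, j) \<in> P" using Dm isin unfolding is_ideal_def by auto
        moreover have "cleq (c, j) (c, Suc j)" unfolding cleq_def by auto
        ultimately have "(c, j) \<in> D m - {(c, j)}" using id unfolding is_ideal_def by blast
        thus False by simp
      qed
      thus ?thesis unfolding toggle_def using isin False \<open>j < s + m\<close> by auto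
    qed
  qed
qed

definition RR :: "nat \<Rightarrow> nat \<Rightarrow> nat" where
  "RR m i = (if m < up then (if i \<le> m then Suc m else m) else (if i < m then max i lo else m))"

lemma chain_aux:
  assumes m: "lo \<le> m" "m \<le> up"
  shows "i + k = len \<Longrightarrow> chain_toggle P (map (Pair c) [s + i..<s + len]) (D m) = D (RR m i)"
proof (induction k arbitrary: i)
  case 0
  have "up \<le> len" using up_len m by simp
  thus ?case using 0 m unfolding RR_def by (auto simp: chain_toggle_Nil)
next
  case (Suc k)
  have l: "[s + i..<s + len] = (s + i) # [s + Suc i..<s + len]" using Suc.prems by (simp add: upt_rec)
  have IH: "chain_toggle P (map (Pair c) [s + Suc i..<s + len]) (D m) = D (RR m (Suc i))"
    using Suc.IH[of "Suc i"] Suc.prems by simp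
  have b: "lo \<le> RR m (Suc i)" "RR m (Suc i) \<le> up" using m unfolding RR_def by auto
  have "chain_toggle P (map (Pair c) [s + i..<s + len]) (D m) = toggle P (c, s + i) (D (RR m (Suc i)))"
    unfolding l using IH by (simp add: chain_toggle_Cons)
  also have "\<dots> = D (RR m i)"
    unfolding step[OF b, of "s + i", simplified]
    using m unfolding RR_def by (intro arg_cong[where f=D]) (auto simp: max_def)
  finally show ?case .
qed

lemma chain:
  assumes m: "lo \<le> m" "m \<le> up"
  shows "chain_toggle P (map (Pair c) [s..<s + len]) (D m) = D (if m < up then Suc m else lo)"
  using chain_aux[OF m, of 0 len] m unfolding RR_def by auto

end


lemma sum_tele1: "(\<Sum>c\<in>{1..a}. (h c - h (Suc c) :: real)) = h 1 - h (Suc a)"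
  by (induction a) (auto simp: sum.cl_ivl_Suc)

lemma sum_shift1: "(\<Sum>c\<in>{1..a}. (h (Suc c) :: real)) = (\<Sum>c\<in>{1..a}. h c) - h 1 + h (Suc a)"
  by (induction a) (auto simp: sum.cl_ivl_Suc)

lemma sum_gauss: "(\<Sum>c\<in>{1..a}. real c) = real a * (real a + 1) / 2"
  by (induction a) (auto simp: sum.cl_ivl_Suc field_simps)

lemma downclosed_interval:
  assumes "finite J" "\<And>j. j \<in> J \<Longrightarrow> s \<le> j" "\<And>j j'. j \<in> J \<Longrightarrow> s \<le> j' \<Longrightarrow> j' \<le> j \<Longrightarrow> j' \<in> J"
  shows "J = {s..<s + card J}"
proof (cases "J = {}")
  case False
  define M where "M = Max J"
  have M: "M \<in> J" "\<And>j. j \<in> J \<Longrightarrow> j \<le> M" using Max_in Max_ge assms(1) False unfolding M_def by auto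
  have "J = {s..M}"
  proof
    show "J \<subseteq> {s..M}" using M(2) assms(2) by auto
    show "{s..M} \<subseteq> J"
    proof
      fix j assume "j \<in> {s..M}"
      thus "j \<in> J" using assms(3)[OF M(1), of j] by auto
    qed
  qed
  moreover have "s \<le> M" using M assms(2) by auto
  ultimately show ?thesis by auto
qed simp

lemma fold_conj:
  assumes "\<And>c n. c \<in> set w \<Longrightarrow> n \<in> V \<Longrightarrow> \<sigma> c (d n) = d (\<tau> c n) \<and> \<tau> c n \<in> V" "n \<in> V"
  shows "fold (\<lambda>c f. \<sigma> c \<circ> f) w id (d n) = d (fold (\<lambda>c f. \<tau> c \<circ> f) w id n)"
  using assms
proof (induction w arbitrary: n)
  case (Cons c w)
  have "fold (\<lambda>c f. \<sigma> c \<circ> f) (c # w) id (d n) = fold (\<lambda>c f. \<sigma> c \<circ> f) w id (\<sigma> c (d n))"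
    using fold_comp_id[of \<sigma> w "\<sigma> c"] by simp
  also have "\<dots> = fold (\<lambda>c f. \<sigma> c \<circ> f) w id (d (\<tau> c n))" using Cons.prems by simp
  also have "\<dots> = d (fold (\<lambda>c f. \<tau> c \<circ> f) w id (\<tau> c n))"
  proof -
    have h: "\<And>c' n'. c' \<in> set w \<Longrightarrow> n' \<in> V \<Longrightarrow> \<sigma> c' (d n') = d (\<tau> c' n') \<and> \<tau> c' n' \<in> V"
      using Cons.prems(1) by simp
    have "\<tau> c n \<in> V" using Cons.prems by simp
    from Cons.IH[OF h this] show ?thesis .
  qed
  also have "\<dots> = d (fold (\<lambda>c f. \<tau> c \<circ> f) (c # w) id n)"
    using fold_comp_id[of \<tau> w "\<tau> c"] by simp
  finally show ?case .
qed simp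

section \<open>Rectangle\<close>

definition VQ :: "nat \<Rightarrow> nat \<Rightarrow> (nat \<Rightarrow> nat) set" where
  "VQ a b = {n. (\<forall>c. c \<notin> {1..a} \<longrightarrow> n c = 0) \<and> (\<forall>c\<in>{1..a}. n c \<le> b) \<and> (\<forall>c. 1 \<le> c \<and> c < a \<longrightarrow> n (Suc c) \<le> n c)}"

definition UQ :: "nat \<Rightarrow> nat \<Rightarrow> (nat \<Rightarrow> nat) \<Rightarrow> nat" where
  "UQ b c n = (if c = 1 then b else n (c - 1))"

definition LoQ :: "nat \<Rightarrow> (nat \<Rightarrow> nat) \<Rightarrow> nat" where
  "LoQ c n = n (Suc c)"

definition decQ :: "nat \<Rightarrow> (nat \<Rightarrow> nat) \<Rightarrow> (nat \<times> nat) set" where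
  "decQ a n = Sigma {1..a} (\<lambda>c. {1..n c})"

lemma VQ_anti: "n \<in> VQ a b \<Longrightarrow> 1 \<le> c \<Longrightarrow> c \<le> d \<Longrightarrow> d \<le> a \<Longrightarrow> n d \<le> n c"
proof (induction d)
  case (Suc d)
  show ?case
  proof (cases "c = Suc d")
    case False
    hence "n (Suc d) \<le> n d" using Suc.prems unfolding VQ_def by auto
    thus ?thesis using Suc False by auto
  qed simp
qed simp

lemma VQ_finite: "finite (VQ a b)"
proof (rule finite_subset)
  show "VQ a b \<subseteq> {f. \<forall>x. (x \<in> {1..a} \<longrightarrow> f x \<in> {0..b}) \<and> (x \<notin> {1..a} \<longrightarrow> f x = 0)}"
    unfolding VQ_def by auto
  show "finite {f. \<forall>x. (x \<in> {1..a} \<longrightarrow> f x \<in> {0..b}) \<and> (x \<notin> {1..a} \<longrightarrow> f x = (0::nat))}"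
    by (rule finite_set_of_finite_funs) auto
qed

lemma VQ_upd:
  assumes "n \<in> VQ a b" "c \<in> {1..a}"
  shows "n(c := m) \<in> VQ a b \<longleftrightarrow> LoQ c n \<le> m \<and> m \<le> UQ b c n"
proof
  assume m: "n(c := m) \<in> VQ a b"
  have "LoQ c n \<le> m"
  proof (cases "c < a")
    case True thus ?thesis using m assms(2) unfolding VQ_def LoQ_def by (auto dest!: spec[of _ c])
  next
    case False thus ?thesis using assms unfolding VQ_def LoQ_def by auto
  qed
  moreover have "m \<le> UQ b c n"
  proof (cases "c = 1")
    case True thus ?thesis using m assms(2) unfolding VQ_def UQ_def by (auto dest!: bspec[of _ _ c])
  next
    case False
    hence c1: "1 \<le> c - 1 \<and> c - 1 < a" "Suc (c - 1) = c" "c - 1 \<noteq> c" using assms(2) by auto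
    have "\<forall>d. 1 \<le> d \<and> d < a \<longrightarrow> (n(c := m)) (Suc d) \<le> (n(c := m)) d" using m unfolding VQ_def by blast
    hence "(n(c := m)) (Suc (c - 1)) \<le> (n(c := m)) (c - 1)" using c1(1) by blast
    thus ?thesis using c1 False unfolding UQ_def by simp
  qed
  ultimately show "LoQ c n \<le> m \<and> m \<le> UQ b c n" ..
next
  assume m: "LoQ c n \<le> m \<and> m \<le> UQ b c n"
  have n: "\<forall>c. c \<notin> {1..a} \<longrightarrow> n c = 0" "\<forall>c\<in>{1..a}. n c \<le> b" "\<forall>c. 1 \<le> c \<and> c < a \<longrightarrow> n (Suc c) \<le> n c"
    using assms(1) unfolding VQ_def by auto
  have "m \<le> b"
  proof (cases "c = 1")
    case True thus ?thesis using m unfolding UQ_def by simp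
  next
    case False
    hence "c - 1 \<in> {1..a}" using assms(2) by auto
    thus ?thesis using m n(2) False unfolding UQ_def by fastforce
  qed
  moreover have "n (Suc c) \<le> m" using m unfolding LoQ_def by simp
  moreover have "c \<noteq> 1 \<Longrightarrow> m \<le> n (c - 1)" using m unfolding UQ_def by simp
  ultimately have A: "m \<le> b" "n (Suc c) \<le> m" "c \<noteq> 1 \<Longrightarrow> m \<le> n (c - 1)" by auto
  have "(n(c := m)) (Suc d) \<le> (n(c := m)) d" if d: "1 \<le> d" "d < a" for d
  proof (cases "Suc d = c")
    case True
    hence "c \<noteq> 1" "d = c - 1" using d by auto
    thus ?thesis using A(3) True by auto
  next
    case False
    show ?thesis
    proof (cases "d = c")
      case True thus ?thesis using A(2) by simp
    next
      case False2: False
      thus ?thesis using False n(3) d by simp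
    qed
  qed
  moreover have "(n(c := m)) d = 0" if "d \<notin> {1..a}" for d using that n(1) assms(2) by auto
  moreover have "(n(c := m)) d \<le> b" if "d \<in> {1..a}" for d using that n(2) A(1) by auto
  ultimately show "n(c := m) \<in> VQ a b" unfolding VQ_def by blast
qed

lemma colsysQ: "colsys a (UQ b) LoQ (VQ a b)"
proof
  show "finite (VQ a b)" by (rule VQ_finite)
  show "n(c := m) \<in> VQ a b \<longleftrightarrow> LoQ c n \<le> m \<and> m \<le> UQ b c n" if "n \<in> VQ a b" "c \<in> {1..a}" for n c m
    using VQ_upd[OF that] .
  show "UQ b c n = UQ b c n'" if "n (c - 1) = n' (c - 1)" for c n n'
    using that unfolding UQ_def by simp
  show "LoQ c n = LoQ c n'" if "n (c + 1) = n' (c + 1)" for c n n'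
    using that unfolding LoQ_def by simp
qed

lemma decQ_ideal:
  assumes z: "\<forall>c. c \<notin> {1..a} \<longrightarrow> n c = 0"
  shows "is_ideal (Qposet a b) (decQ a n) \<longleftrightarrow> n \<in> VQ a b"
proof
  assume I: "is_ideal (Qposet a b) (decQ a n)"
  have sub: "decQ a n \<subseteq> Qposet a b" and dc: "\<And>x y. x \<in> decQ a n \<Longrightarrow> y \<in> Qposet a b \<Longrightarrow> cleq y x \<Longrightarrow> y \<in> decQ a n"
    using I unfolding is_ideal_def by auto
  have "n c \<le> b" if "c \<in> {1..a}" for c
  proof (cases "n c = 0")
    case False
    hence "(c, n c) \<in> decQ a n" using that unfolding decQ_def by auto
    thus ?thesis using sub unfolding Qposet_def by auto
  qed simp
  moreover have "n (Suc c) \<le> n c" if "1 \<le> c" "c < a" for c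
  proof (cases "n (Suc c) = 0")
    case False
    hence x: "(Suc c, n (Suc c)) \<in> decQ a n" using that unfolding decQ_def by auto
    hence "n (Suc c) \<le> b" using sub unfolding Qposet_def by auto
    hence "(c, n (Suc c)) \<in> Qposet a b" using that False unfolding Qposet_def by auto
    moreover have "cleq (c, n (Suc c)) (Suc c, n (Suc c))" unfolding cleq_def by auto
    ultimately have "(c, n (Suc c)) \<in> decQ a n" using dc x by blast
    thus ?thesis unfolding decQ_def by auto
  qed simp
  ultimately show "n \<in> VQ a b" using z unfolding VQ_def by auto
next
  assume n: "n \<in> VQ a b"
  show "is_ideal (Qposet a b) (decQ a n)"
    unfolding is_ideal_def
  proof (intro conjI ballI impI)
    show "decQ a n \<subseteq> Qposet a b"
      using n unfolding decQ_def Qposet_def VQ_def by force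
    fix x y assume x: "x \<in> decQ a n" and y: "y \<in> Qposet a b" and le: "cleq y x"
    obtain c j where cj: "x = (c, j)" "c \<in> {1..a}" "1 \<le> j" "j \<le> n c" using x unfolding decQ_def by auto
    obtain c' j' where cj': "y = (c', j')" "c' \<in> {1..a}" "j' \<in> {1..b}" using y unfolding Qposet_def by auto
    have "c' \<le> c" "j' \<le> j" using le cj cj' unfolding cleq_def by auto
    hence "n c \<le> n c'" using VQ_anti[OF n] cj cj' by auto
    thus "y \<in> decQ a n" using cj cj' \<open>j' \<le> j\<close> unfolding decQ_def by auto
  qed
qed

lemma card_decQ: "real (card (decQ a n)) = (\<Sum>c\<in>{1..a}. real (n c))"
  unfolding decQ_def by (simp add: card_SigmaI)

lemma decQ_col: "c \<in> {1..a} \<Longrightarrow> {j. (c, j) \<in> decQ a n} = {1..n c}"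
  unfolding decQ_def by auto

lemma decQ_inj: "inj_on (decQ a) (VQ a b)"
proof (rule inj_onI)
  fix n n' assume n: "n \<in> VQ a b" "n' \<in> VQ a b" and e: "decQ a n = decQ a n'"
  show "n = n'"
  proof
    fix c show "n c = n' c"
    proof (cases "c \<in> {1..a}")
      case True
      have "card {j. (c, j) \<in> decQ a n} = card {j. (c, j) \<in> decQ a n'}" using e by simp
      thus ?thesis using decQ_col[OF True] by simp
    next
      case False thus ?thesis using n unfolding VQ_def by auto
    qed
  qed
qed

lemma decQ_surj: "decQ a ` VQ a b = ideals (Qposet a b)"
proof
  show "decQ a ` VQ a b \<subseteq> ideals (Qposet a b)"
    unfolding ideals_def using decQ_ideal unfolding VQ_def by auto
next
  show "ideals (Qposet a b) \<subseteq> decQ a ` VQ a b"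
  proof
    fix I assume "I \<in> ideals (Qposet a b)"
    hence I: "is_ideal (Qposet a b) I" unfolding ideals_def by simp
    define n where "n c = (if c \<in> {1..a} then card {j. (c, j) \<in> I} else 0)" for c
    have col: "{j. (c, j) \<in> I} = {1..n c}" if c: "c \<in> {1..a}" for c
    proof -
      have sub: "{j. (c, j) \<in> I} \<subseteq> {1..b}" using I unfolding is_ideal_def Qposet_def by auto
      have "{j. (c, j) \<in> I} = {1..<1 + card {j. (c, j) \<in> I}}"
      proof (rule downclosed_interval)
        show "finite {j. (c, j) \<in> I}" using sub finite_subset by blast
        show "1 \<le> j" if "j \<in> {j. (c, j) \<in> I}" for j using sub that by auto
        show "j' \<in> {j. (c, j) \<in> I}" if "j \<in> {j. (c, j) \<in> I}" "1 \<le> j'" "j' \<le> j" for j j'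
        proof -
          have "(c, j') \<in> Qposet a b" using sub that c unfolding Qposet_def by auto
          moreover have "cleq (c, j') (c, j)" using that unfolding cleq_def by auto
          ultimately show ?thesis using I that unfolding is_ideal_def by blast
        qed
      qed
      thus ?thesis using c unfolding n_def by (simp add: atLeastLessThanSuc_atLeastAtMost)
    qed
    have "I = decQ a n"
    proof (rule set_eqI)
      fix x :: "nat \<times> nat" obtain c j where x: "x = (c, j)" by fastforce
      show "x \<in> I \<longleftrightarrow> x \<in> decQ a n"
      proof (cases "c \<in> {1..a}")
        case True thus ?thesis using col[OF True] x unfolding decQ_def by auto
      next
        case False thus ?thesis using I x unfolding is_ideal_def Qposet_def decQ_def by auto
      qed
    qed
    moreover have "n \<in> VQ a b"
      using decQ_ideal[of a n b] I \<open>I = decQ a n\<close> unfolding n_def by auto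
    ultimately show "I \<in> decQ a ` VQ a b" by blast
  qed
qed

lemma columnQ: "c \<in> {1..a} \<Longrightarrow> column (Qposet a b) c = map (Pair c) [1..<1 + b]"
proof -
  assume "c \<in> {1..a}"
  hence "{j. (c, j) \<in> Qposet a b} = {1..<1 + b}" unfolding Qposet_def by auto
  thus ?thesis unfolding column_def by simp
qed

lemma chainQ:
  assumes n: "n \<in> VQ a b" and c: "c \<in> {1..a}"
  shows "chain_toggle (Qposet a b) (column (Qposet a b) c) (decQ a n) = decQ a (colsys.tau (UQ b) LoQ c n)"
proof -
  interpret cs: colsys a "UQ b" LoQ "VQ a b" by (rule colsysQ)
  define R where "R = decQ a (n(c := 0))"
  have Dm: "R \<union> {(c, j) | j. 1 \<le> j \<and> j < 1 + m} = decQ a (n(c := m))" for m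
    unfolding R_def decQ_def using c by auto
  interpret cg: colgen "Qposet a b" c 1 b "LoQ c n" "UQ b c n" R
  proof
    show "fst x \<noteq> c" if "x \<in> R" for x using that unfolding R_def decQ_def by auto
    show "(c, j) \<in> Qposet a b \<longleftrightarrow> 1 \<le> j \<and> j < 1 + b" for j using c unfolding Qposet_def by auto
    show "is_ideal (Qposet a b) (R \<union> {(c, j) |j. 1 \<le> j \<and> j < 1 + m}) \<longleftrightarrow> LoQ c n \<le> m \<and> m \<le> UQ b c n" for m
    proof -
      have "\<forall>d. d \<notin> {1..a} \<longrightarrow> (n(c := m)) d = 0" using n c unfolding VQ_def by auto
      thus ?thesis unfolding Dm using decQ_ideal VQ_upd[OF n c] by blast
    qed
  qed
  have b: "LoQ c n \<le> n c" "n c \<le> UQ b c n" using cs.bounds[OF n c] by auto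
  have "decQ a n = cg.D (n c)" unfolding cg.D_def Dm by simp
  hence "chain_toggle (Qposet a b) (column (Qposet a b) c) (decQ a n)
      = cg.D (if n c < UQ b c n then Suc (n c) else LoQ c n)"
    using cg.chain[OF b] columnQ[OF c] by simp
  also have "\<dots> = decQ a (cs.tau c n)" unfolding cg.D_def Dm cs.tau_def ..
  finally show ?thesis .
qed


context
  fixes a b :: nat
begin

interpretation cs: colsys a "UQ b" LoQ "VQ a b" by (rule colsysQ)

definition XQ :: "(nat \<Rightarrow> nat) \<Rightarrow> nat \<Rightarrow> nat" where
  "XQ n c = (if n 1 < b then Suc (n c) else n (Suc c))"

lemma TTQ_prefix:
  assumes n: "n \<in> VQ a b"
  shows "k \<le> a \<Longrightarrow> cs.TT [1..<k+1] n = (\<lambda>c. if 1 \<le> c \<and> c \<le> k then XQ n c else n c)"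
proof (induction k)
  case 0
  show ?case by (rule ext) simp
next
  case (Suc k)
  define S where "S = (\<lambda>c. if 1 \<le> c \<and> c \<le> k then XQ n c else n c)"
  have l: "[1..<Suc k + 1] = [1..<k+1] @ [Suc k]" by simp
  have e: "cs.TT [1..<Suc k + 1] n = cs.tau (Suc k) S"
    unfolding l cs.TT_snoc using Suc by (simp add: S_def)
  have nb: "n 1 \<le> b" using n Suc.prems unfolding VQ_def by auto
  have new: "(if S (Suc k) < UQ b (Suc k) S then Suc (S (Suc k)) else LoQ (Suc k) S) = XQ n (Suc k)"
  proof (cases "k = 0")
    case True
    thus ?thesis using nb unfolding S_def UQ_def LoQ_def XQ_def by auto
  next
    case False
    have anti: "n (Suc k) \<le> n k" using n Suc.prems False unfolding VQ_def by auto
    show ?thesis using False anti unfolding S_def UQ_def LoQ_def XQ_def by auto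
  qed
  show ?case unfolding e cs.tau_def new by (rule ext) (auto simp: S_def)
qed

lemma TTQ:
  assumes n: "n \<in> VQ a b"
  shows "cs.TT [1..<a+1] n = (\<lambda>c. if c \<in> {1..a} then XQ n c else 0)"
  using TTQ_prefix[OF n, of a] n unfolding VQ_def by (auto intro!: ext)

definition HQ :: "nat \<Rightarrow> real" where
  "HQ x = - (real x * (real x - 1)) / 2 + real x * real b / 2 - (real a + 1) * real x / 2"

definition gQ :: "(nat \<Rightarrow> nat) \<Rightarrow> real" where
  "gQ n = (\<Sum>c\<in>{1..a}. HQ (n c) + real c * real (n c))"

lemma cobQ:
  assumes n: "n \<in> VQ a b" and a: "a \<ge> 1"
  shows "cs.F n - real a * real b / 2 = gQ n - gQ (cs.TT [1..<a+1] n)"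
proof (cases "n 1 < b")
  case True
  have T: "cs.TT [1..<a+1] n c = Suc (n c)" if "c \<in> {1..a}" for c
    using TTQ[OF n] that True unfolding XQ_def by simp
  have "gQ n - gQ (cs.TT [1..<a+1] n) = (\<Sum>c\<in>{1..a}. (HQ (n c) + real c * real (n c)) - (HQ (Suc (n c)) + real c * real (Suc (n c))))"
    unfolding gQ_def using T by (simp add: sum_subtractf)
  also have "\<dots> = (\<Sum>c\<in>{1..a}. real (n c) - real b / 2 + (real a + 1) / 2 - real c)"
    by (intro sum.cong) (auto simp: HQ_def field_simps)
  also have "\<dots> = cs.F n - real a * real b / 2 + real a * (real a + 1) / 2 - (\<Sum>c\<in>{1..a}. real c)"
    unfolding cs.F_def by (simp add: sum.distrib sum_subtractf)
  also have "\<dots> = cs.F n - real a * real b / 2" using sum_gauss[of a] by simp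
  finally show ?thesis by simp
next
  case False
  have nb: "n 1 = b" using False n a unfolding VQ_def by force
  have z: "n (Suc a) = 0" using n unfolding VQ_def by auto
  have T: "cs.TT [1..<a+1] n c = n (Suc c)" if "c \<in> {1..a}" for c
    using TTQ[OF n] that False unfolding XQ_def by simp
  have "gQ n - gQ (cs.TT [1..<a+1] n) = (\<Sum>c\<in>{1..a}. (HQ (n c) + real c * real (n c)) - (HQ (n (Suc c)) + real c * real (n (Suc c))))"
    unfolding gQ_def using T by (simp add: sum_subtractf)
  also have "\<dots> = (\<Sum>c\<in>{1..a}. (HQ (n c) - HQ (n (Suc c))) + (real c * real (n c) - real (Suc c) * real (n (Suc c))) + real (n (Suc c)))"
    by (intro sum.cong) (auto simp: field_simps)
  also have "\<dots> = (HQ (n 1) - HQ (n (Suc a))) + (real 1 * real (n 1) - real (Suc a) * real (n (Suc a))) + (\<Sum>c\<in>{1..a}. real (n (Suc c)))"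
    using sum_tele1[of "\<lambda>c. HQ (n c)" a] sum_tele1[of "\<lambda>c. real c * real (n c)" a]
    by (simp add: sum.distrib)
  also have "\<dots> = HQ b - HQ 0 + real b + (cs.F n - real b)"
    using sum_shift1[of "\<lambda>c. real (n c)" a] nb z unfolding cs.F_def by simp
  also have "\<dots> = cs.F n - real a * real b / 2" unfolding HQ_def by (simp add: field_simps)
  finally show ?thesis by simp
qed

lemma homQ:
  assumes a: "a \<ge> 1"
  shows "HomC (VQ a b) (cs.TT [1..<a+1]) cs.F (real a * real b / 2)"
proof (rule coboundary_HomC[where g = gQ])
  have s: "set [1..<a+1] \<subseteq> {1..a}" by auto
  show "finite (VQ a b)" by (rule VQ_finite)
  show "cs.TT [1..<a + 1] ` VQ a b \<subseteq> VQ a b" using cs.TT_in'[OF s] .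
  show "inj_on (cs.TT [1..<a + 1]) (VQ a b)" using cs.TT_inj[OF s] .
  show "cs.F y - real a * real b / 2 = gQ y - gQ (cs.TT [1..<a + 1] y)" if "y \<in> VQ a b" for y
    using cobQ[OF that a] .
qed

end


section \<open>Shifted staircase\<close>

definition VL :: "nat \<Rightarrow> (nat \<Rightarrow> nat) set" where
  "VL a = {k. (\<forall>c. c \<notin> {1..a} \<longrightarrow> k c = 0) \<and> (\<forall>c\<in>{1..a}. k c \<le> a + 1 - c)
              \<and> (\<forall>c. 2 \<le> c \<and> c \<le> a \<and> 0 < k c \<longrightarrow> k c < k (c - 1))}"

definition UL :: "nat \<Rightarrow> nat \<Rightarrow> (nat \<Rightarrow> nat) \<Rightarrow> nat" where
  "UL a c k = (if c = 1 then a else k (c - 1) - 1)"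

definition LoL :: "nat \<Rightarrow> (nat \<Rightarrow> nat) \<Rightarrow> nat" where
  "LoL c k = (if 0 < k (Suc c) then Suc (k (Suc c)) else 0)"

definition decL :: "nat \<Rightarrow> (nat \<Rightarrow> nat) \<Rightarrow> (nat \<times> nat) set" where
  "decL a k = Sigma {1..a} (\<lambda>c. {c..<c + k c})"

lemma VL_strict: "k \<in> VL a \<Longrightarrow> 2 \<le> c \<Longrightarrow> c \<le> a \<Longrightarrow> 0 < k c \<Longrightarrow> k c < k (c - 1)"
  unfolding VL_def by blast

lemma VL_zero: "k \<in> VL a \<Longrightarrow> c \<notin> {1..a} \<Longrightarrow> k c = 0"
  unfolding VL_def by blast

lemma VL_bound: "k \<in> VL a \<Longrightarrow> c \<in> {1..a} \<Longrightarrow> k c \<le> a + 1 - c"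
  unfolding VL_def by blast

lemma VL_chain: "k \<in> VL a \<Longrightarrow> 1 \<le> c' \<Longrightarrow> c' \<le> c \<Longrightarrow> c \<le> a \<Longrightarrow> 0 < k c \<Longrightarrow> k c + c \<le> k c' + c'"
proof (induction c)
  case (Suc c)
  show ?case
  proof (cases "c' = Suc c")
    case False
    hence "c' \<le> c" using Suc.prems by auto
    have "k (Suc c) < k c" using VL_strict[OF Suc.prems(1), of "Suc c"] Suc.prems \<open>c' \<le> c\<close> by auto
    hence "k c + c \<le> k c' + c'" using Suc.IH Suc.prems \<open>c' \<le> c\<close> by auto
    thus ?thesis using \<open>k (Suc c) < k c\<close> by auto
  qed simp
qed simp

lemma VL_zero_prop: "k \<in> VL a \<Longrightarrow> 1 \<le> d \<Longrightarrow> k d = 0 \<Longrightarrow> k (Suc d) = 0"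
proof -
  assume k: "k \<in> VL a" and d: "1 \<le> d" "k d = 0"
  show "k (Suc d) = 0"
  proof (cases "Suc d \<le> a")
    case True
    show ?thesis using VL_strict[OF k, of "Suc d"] True d by (cases "k (Suc d) = 0") auto
  next
    case False thus ?thesis using VL_zero[OF k] by auto
  qed
qed

lemma VL_finite: "finite (VL a)"
proof (rule finite_subset)
  show "VL a \<subseteq> {f. \<forall>x. (x \<in> {1..a} \<longrightarrow> f x \<in> {0..a}) \<and> (x \<notin> {1..a} \<longrightarrow> f x = 0)}"
  proof
    fix f assume f: "f \<in> VL a"
    have "f x \<le> a" if "x \<in> {1..a}" for x using VL_bound[OF f that] that by auto
    thus "f \<in> {f. \<forall>x. (x \<in> {1..a} \<longrightarrow> f x \<in> {0..a}) \<and> (x \<notin> {1..a} \<longrightarrow> f x = 0)}"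
      using VL_zero[OF f] by auto
  qed
  show "finite {f. \<forall>x. (x \<in> {1..a} \<longrightarrow> f x \<in> {0..a}) \<and> (x \<notin> {1..a} \<longrightarrow> f x = (0::nat))}"
    by (rule finite_set_of_finite_funs) auto
qed

lemma VL_upd:
  assumes k: "k \<in> VL a" and c: "c \<in> {1..a}"
  shows "k(c := m) \<in> VL a \<longleftrightarrow> LoL c k \<le> m \<and> m \<le> UL a c k"
proof
  assume m: "k(c := m) \<in> VL a"
  have "LoL c k \<le> m"
  proof (cases "0 < k (Suc c)")
    case True
    hence "Suc c \<le> a" using VL_zero[OF k, of "Suc c"] by (cases "Suc c \<le> a") auto
    hence "(k(c := m)) (Suc c) < (k(c := m)) (Suc c - 1)"
      using VL_strict[OF m, of "Suc c"] True c by auto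
    thus ?thesis using True unfolding LoL_def by simp
  next
    case False thus ?thesis unfolding LoL_def by simp
  qed
  moreover have "m \<le> UL a c k"
  proof (cases "c = 1")
    case True thus ?thesis using VL_bound[OF m c] unfolding UL_def by simp
  next
    case False
    hence c2: "2 \<le> c" "c \<le> a" "c - 1 \<noteq> c" using c by auto
    show ?thesis
    proof (cases "m = 0")
      case False
      hence "(k(c := m)) c < (k(c := m)) (c - 1)" using VL_strict[OF m c2(1,2)] by simp
      thus ?thesis using c2 unfolding UL_def by auto
    qed simp
  qed
  ultimately show "LoL c k \<le> m \<and> m \<le> UL a c k" ..
next
  assume m: "LoL c k \<le> m \<and> m \<le> UL a c k"
  have A1: "m \<le> a + 1 - c"
  proof (cases "c = 1")
    case True thus ?thesis using m unfolding UL_def by simp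
  next
    case False
    hence "c - 1 \<in> {1..a}" using c by auto
    hence "k (c - 1) \<le> a + 1 - (c - 1)" using VL_bound[OF k] by blast
    thus ?thesis using m False c unfolding UL_def by auto
  qed
  have A2: "m < k (c - 1)" if "2 \<le> c" "0 < m"
    using m that unfolding UL_def by auto
  have A3: "k (Suc c) < m" if "0 < k (Suc c)"
    using m that unfolding LoL_def by auto
  have "(\<forall>d. d \<notin> {1..a} \<longrightarrow> (k(c := m)) d = 0)" using VL_zero[OF k] c by auto
  moreover have "(\<forall>d\<in>{1..a}. (k(c := m)) d \<le> a + 1 - d)" using VL_bound[OF k] A1 by auto
  moreover have "(k(c := m)) d < (k(c := m)) (d - 1)" if d: "2 \<le> d" "d \<le> a" "0 < (k(c := m)) d" for d
  proof (cases "d = c")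
    case True thus ?thesis using A2 d by auto
  next
    case False
    show ?thesis
    proof (cases "d - 1 = c")
      case True
      hence "d = Suc c" using d by auto
      thus ?thesis using A3 d False True by auto
    next
      case False2: False
      thus ?thesis using VL_strict[OF k d(1,2)] d False by auto
    qed
  qed
  ultimately show "k(c := m) \<in> VL a" unfolding VL_def by blast
qed

lemma colsysL: "colsys a (UL a) LoL (VL a)"
proof
  show "finite (VL a)" by (rule VL_finite)
  show "n(c := m) \<in> VL a \<longleftrightarrow> LoL c n \<le> m \<and> m \<le> UL a c n" if "n \<in> VL a" "c \<in> {1..a}" for n c m
    using VL_upd[OF that] .
  show "UL a c n = UL a c n'" if "n (c - 1) = n' (c - 1)" for c n n'
    using that unfolding UL_def by simp
  show "LoL c n = LoL c n'" if "n (c + 1) = n' (c + 1)" for c n n'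
    using that unfolding LoL_def by simp
qed

lemma decL_ideal:
  assumes z: "\<forall>c. c \<notin> {1..a} \<longrightarrow> k c = 0"
  shows "is_ideal (Lposet a) (decL a k) \<longleftrightarrow> k \<in> VL a"
proof
  assume I: "is_ideal (Lposet a) (decL a k)"
  have sub: "decL a k \<subseteq> Lposet a" and dc: "\<And>x y. x \<in> decL a k \<Longrightarrow> y \<in> Lposet a \<Longrightarrow> cleq y x \<Longrightarrow> y \<in> decL a k"
    using I unfolding is_ideal_def by auto
  have bd: "k c \<le> a + 1 - c" if "c \<in> {1..a}" for c
  proof (cases "k c = 0")
    case False
    hence "(c, c + k c - 1) \<in> decL a k" using that unfolding decL_def by auto
    thus ?thesis using sub unfolding Lposet_def by auto
  qed simp
  moreover have "k c < k (c - 1)" if c: "2 \<le> c" "c \<le> a" "0 < k c" for c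
  proof -
    have x: "(c, c + k c - 1) \<in> decL a k" using c unfolding decL_def by auto
    have "k c \<le> a + 1 - c" using bd c by auto
    hence "(c - 1, c + k c - 1) \<in> Lposet a" using c unfolding Lposet_def by auto
    moreover have "cleq (c - 1, c + k c - 1) (c, c + k c - 1)" unfolding cleq_def by auto
    ultimately have "(c - 1, c + k c - 1) \<in> decL a k" using dc x by blast
    thus ?thesis unfolding decL_def using c by auto
  qed
  ultimately show "k \<in> VL a" using z unfolding VL_def by blast
next
  assume k: "k \<in> VL a"
  show "is_ideal (Lposet a) (decL a k)"
    unfolding is_ideal_def
  proof (intro conjI ballI impI)
    show "decL a k \<subseteq> Lposet a"
    proof
      fix x assume "x \<in> decL a k"
      then obtain c j where cj: "x = (c, j)" "c \<in> {1..a}" "c \<le> j" "j < c + k c" unfolding decL_def by auto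
      have "k c \<le> a + 1 - c" using VL_bound[OF k cj(2)] .
      thus "x \<in> Lposet a" using cj unfolding Lposet_def by auto
    qed
    fix x y assume x: "x \<in> decL a k" and y: "y \<in> Lposet a" and le: "cleq y x"
    obtain c j where cj: "x = (c, j)" "c \<in> {1..a}" "c \<le> j" "j < c + k c" using x unfolding decL_def by auto
    obtain c' j' where cj': "y = (c', j')" "1 \<le> c'" "c' \<le> j'" "j' \<le> a" using y unfolding Lposet_def by auto
    have le2: "c' \<le> c" "j' \<le> j" using le cj cj' unfolding cleq_def by auto
    have "k c + c \<le> k c' + c'" using VL_chain[OF k cj'(2) le2(1)] cj by auto
    thus "y \<in> decL a k" using cj cj' le2 unfolding decL_def by auto
  qed
qed

lemma card_decL: "real (card (decL a k)) = (\<Sum>c\<in>{1..a}. real (k c))"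
  unfolding decL_def by (simp add: card_SigmaI)

lemma decL_col: "c \<in> {1..a} \<Longrightarrow> {j. (c, j) \<in> decL a k} = {c..<c + k c}"
  unfolding decL_def by auto

lemma decL_inj: "inj_on (decL a) (VL a)"
proof (rule inj_onI)
  fix n n' assume n: "n \<in> VL a" "n' \<in> VL a" and e: "decL a n = decL a n'"
  show "n = n'"
  proof
    fix c show "n c = n' c"
    proof (cases "c \<in> {1..a}")
      case True
      have "card {j. (c, j) \<in> decL a n} = card {j. (c, j) \<in> decL a n'}" using e by simp
      thus ?thesis using decL_col[OF True] by simp
    next
      case False thus ?thesis using VL_zero[OF n(1) False] VL_zero[OF n(2) False] by simp
    qed
  qed
qed

lemma decL_surj: "decL a ` VL a = ideals (Lposet a)"
proof
  show "decL a ` VL a \<subseteq> ideals (Lposet a)"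
    unfolding ideals_def using decL_ideal VL_zero by blast
next
  show "ideals (Lposet a) \<subseteq> decL a ` VL a"
  proof
    fix I assume "I \<in> ideals (Lposet a)"
    hence I: "is_ideal (Lposet a) I" unfolding ideals_def by simp
    define n where "n c = (if c \<in> {1..a} then card {j. (c, j) \<in> I} else 0)" for c
    have col: "{j. (c, j) \<in> I} = {c..<c + n c}" if c: "c \<in> {1..a}" for c
    proof -
      have sub: "{j. (c, j) \<in> I} \<subseteq> {c..a}" using I unfolding is_ideal_def Lposet_def by auto
      have "{j. (c, j) \<in> I} = {c..<c + card {j. (c, j) \<in> I}}"
      proof (rule downclosed_interval)
        show "finite {j. (c, j) \<in> I}" using sub finite_subset by blast
        show "c \<le> j" if "j \<in> {j. (c, j) \<in> I}" for j using sub that by auto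
        show "j' \<in> {j. (c, j) \<in> I}" if "j \<in> {j. (c, j) \<in> I}" "c \<le> j'" "j' \<le> j" for j j'
        proof -
          have "(c, j') \<in> Lposet a" using sub that c unfolding Lposet_def by auto
          moreover have "cleq (c, j') (c, j)" using that unfolding cleq_def by auto
          ultimately show ?thesis using I that unfolding is_ideal_def by blast
        qed
      qed
      thus ?thesis using c unfolding n_def by simp
    qed
    have "I = decL a n"
    proof (rule set_eqI)
      fix x :: "nat \<times> nat" obtain c j where x: "x = (c, j)" by fastforce
      show "x \<in> I \<longleftrightarrow> x \<in> decL a n"
      proof (cases "c \<in> {1..a}")
        case True thus ?thesis using col[OF True] x unfolding decL_def by auto
      next
        case False thus ?thesis using I x unfolding is_ideal_def Lposet_def decL_def by auto
      qed
    qed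
    moreover have "n \<in> VL a"
      using decL_ideal[of a n] I \<open>I = decL a n\<close> unfolding n_def by auto
    ultimately show "I \<in> decL a ` VL a" by blast
  qed
qed

lemma columnL: "c \<in> {1..a} \<Longrightarrow> column (Lposet a) c = map (Pair c) [c..<c + (a + 1 - c)]"
proof -
  assume "c \<in> {1..a}"
  hence "{j. (c, j) \<in> Lposet a} = {c..<c + (a + 1 - c)}" unfolding Lposet_def by auto
  thus ?thesis unfolding column_def by simp
qed

lemma chainL:
  assumes n: "n \<in> VL a" and c: "c \<in> {1..a}"
  shows "chain_toggle (Lposet a) (column (Lposet a) c) (decL a n) = decL a (colsys.tau (UL a) LoL c n)"
proof -
  interpret cs: colsys a "UL a" LoL "VL a" by (rule colsysL)
  define R where "R = decL a (n(c := 0))"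
  have Dm: "R \<union> {(c, j) | j. c \<le> j \<and> j < c + m} = decL a (n(c := m))" for m
    unfolding R_def decL_def using c by auto
  interpret cg: colgen "Lposet a" c c "a + 1 - c" "LoL c n" "UL a c n" R
  proof
    show "fst x \<noteq> c" if "x \<in> R" for x using that unfolding R_def decL_def by auto
    show "(c, j) \<in> Lposet a \<longleftrightarrow> c \<le> j \<and> j < c + (a + 1 - c)" for j using c unfolding Lposet_def by auto
    show "is_ideal (Lposet a) (R \<union> {(c, j) |j. c \<le> j \<and> j < c + m}) \<longleftrightarrow> LoL c n \<le> m \<and> m \<le> UL a c n" for m
    proof -
      have "\<forall>d. d \<notin> {1..a} \<longrightarrow> (n(c := m)) d = 0" using VL_zero[OF n] c by auto
      thus ?thesis unfolding Dm using decL_ideal VL_upd[OF n c] by blast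
    qed
  qed
  have b: "LoL c n \<le> n c" "n c \<le> UL a c n" using cs.bounds[OF n c] by auto
  have "decL a n = cg.D (n c)" unfolding cg.D_def Dm by simp
  hence "chain_toggle (Lposet a) (column (Lposet a) c) (decL a n)
      = cg.D (if n c < UL a c n then Suc (n c) else LoL c n)"
    using cg.chain[OF b] columnL[OF c] by simp
  also have "\<dots> = decL a (cs.tau c n)" unfolding cg.D_def Dm cs.tau_def ..
  finally show ?thesis .
qed


context
  fixes a :: nat
begin

interpretation cs: colsys a "UL a" LoL "VL a" by (rule colsysL)

definition XL :: "(nat \<Rightarrow> nat) \<Rightarrow> nat \<Rightarrow> nat" where
  "XL n c = (if n 1 < a then (if c = 1 \<or> 0 < n (c - 1) then Suc (n c) else 0)
             else (if 0 < n (Suc c) then Suc (n (Suc c)) else 0))"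

lemma TTL_prefix:
  assumes n: "n \<in> VL a"
  shows "k \<le> a \<Longrightarrow> cs.TT [1..<k+1] n = (\<lambda>c. if 1 \<le> c \<and> c \<le> k then XL n c else n c)"
proof (induction k)
  case 0
  show ?case by (rule ext) simp
next
  case (Suc k)
  define S where "S = (\<lambda>c. if 1 \<le> c \<and> c \<le> k then XL n c else n c)"
  have l: "[1..<Suc k + 1] = [1..<k+1] @ [Suc k]" by simp
  have e: "cs.TT [1..<Suc k + 1] n = cs.tau (Suc k) S"
    unfolding l cs.TT_snoc using Suc by (simp add: S_def)
  have S1: "S (Suc k) = n (Suc k)" "S (Suc (Suc k)) = n (Suc (Suc k))" unfolding S_def by auto
  have nb: "n 1 \<le> a" using VL_bound[OF n, of 1] Suc.prems by auto
  have new: "(if S (Suc k) < UL a (Suc k) S then Suc (S (Suc k)) else LoL (Suc k) S) = XL n (Suc k)"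
  proof (cases "k = 0")
    case True
    thus ?thesis using nb unfolding S_def UL_def LoL_def XL_def by auto
  next
    case False
    have Sk: "S k = XL n k" unfolding S_def using False Suc.prems by auto
    have U: "UL a (Suc k) S = XL n k - 1" unfolding UL_def using Sk False by simp
    show ?thesis
    proof (cases "n 1 < a")
      case True
      show ?thesis
      proof (cases "(k = 1 \<or> 0 < n (k - 1)) \<and> 0 < n k")
        case True2: True
        have "n (Suc k) < n k"
          using VL_strict[OF n, of "Suc k"] Suc.prems False True2 by (cases "n (Suc k) = 0") auto
        thus ?thesis using True True2 False unfolding U S1 XL_def LoL_def by auto
      next
        case False2: False
        have z: "n k = 0"
        proof (cases "k = 1 \<or> 0 < n (k - 1)")
          case True thus ?thesis using False2 by auto
        next
          case False3: False
          hence "n (k - 1) = 0" "1 \<le> k - 1" using False by auto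
          from VL_zero_prop[OF n this(2) this(1)] show ?thesis using False by simp
        qed
        have z1: "n (Suc k) = 0" using VL_zero_prop[OF n _ z] False by simp
        have z2: "n (Suc (Suc k)) = 0" using VL_zero_prop[OF n _ z1] by simp
        show ?thesis using True z z1 z2 False unfolding U S1 XL_def LoL_def by auto
      qed
    next
      case False2: False
      show ?thesis using False2 False unfolding U S1 XL_def LoL_def by auto
    qed
  qed
  show ?case unfolding e cs.tau_def new by (rule ext) (auto simp: S_def)
qed

lemma TTL:
  assumes n: "n \<in> VL a"
  shows "c \<in> {1..a} \<Longrightarrow> cs.TT [1..<a+1] n c = XL n c"
  using TTL_prefix[OF n, of a] by auto

definition CL :: real where "CL = real a * (real a + 1) / 4"

definition psi :: "nat \<Rightarrow> real" where
  "psi x = (if x = 0 then 0 else CL - real x * (real x - 1) / 2)"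

definition gL :: "(nat \<Rightarrow> nat) \<Rightarrow> real" where
  "gL n = (\<Sum>c\<in>{1..a}. psi (n c))"

lemma psi_Suc: "psi x - psi (Suc x) = (if x = 0 then - CL else real x)"
  unfolding psi_def by (auto simp: field_simps)

lemma cobL:
  assumes n: "n \<in> VL a" and a: "a \<ge> 1"
  shows "cs.F n - CL = gL n - gL (cs.TT [1..<a+1] n)"
proof (cases "n 1 < a")
  case True
  define z where "z i = (if i = 0 \<or> 0 < n i then 1 else 0 :: real)" for i
  have za: "z a = 0"
  proof (rule ccontr)
    assume "z a \<noteq> 0"
    hence "0 < n a" using a unfolding z_def by (auto split: if_splits)
    moreover have "n a + a \<le> n 1 + 1" using VL_chain[OF n, of 1 a] a \<open>0 < n a\<close> by auto
    ultimately show False using True by auto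
  qed
  have trm: "psi (n c) - psi (cs.TT [1..<a+1] n c) = real (n c) - CL * (z (c - 1) - z c)"
    if c: "c \<in> {1..a}" for c
  proof (cases "0 < n c")
    case True2: True
    have "c = 1 \<or> 0 < n (c - 1)" using VL_strict[OF n, of c] c True2 by (cases "c = 1") auto
    hence "cs.TT [1..<a+1] n c = Suc (n c)" using TTL[OF n c] True unfolding XL_def by simp
    moreover have "z (c - 1) = 1" "z c = 1"
      using \<open>c = 1 \<or> 0 < n (c - 1)\<close> True2 unfolding z_def by auto
    ultimately show ?thesis using psi_Suc[of "n c"] True2 by simp
  next
    case False2: False
    hence n0: "n c = 0" by simp
    show ?thesis
    proof (cases "c = 1 \<or> 0 < n (c - 1)")
      case True3: True
      hence "cs.TT [1..<a+1] n c = 1" using TTL[OF n c] True n0 unfolding XL_def by simp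
      moreover have "z (c - 1) = 1" "z c = 0" using True3 n0 c unfolding z_def by auto
      ultimately show ?thesis using psi_Suc[of 0] n0 by (simp add: psi_def)
    next
      case False3: False
      hence "cs.TT [1..<a+1] n c = 0" using TTL[OF n c] True n0 unfolding XL_def by simp
      moreover have "z (c - 1) = 0" "z c = 0" using False3 n0 c unfolding z_def by auto
      ultimately show ?thesis using n0 by (simp add: psi_def)
    qed
  qed
  have "gL n - gL (cs.TT [1..<a+1] n) = (\<Sum>c\<in>{1..a}. real (n c) - CL * (z (c - 1) - z c))"
    unfolding gL_def using trm by (simp add: sum_subtractf[symmetric])
  also have "\<dots> = cs.F n - CL * (\<Sum>c\<in>{1..a}. z (c - 1) - z c)"
    unfolding cs.F_def by (simp only: sum_subtractf[of "\<lambda>c. real (n c)" "\<lambda>c. CL * (z (c - 1) - z c)"] sum_distrib_left)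
  also have "(\<Sum>c\<in>{1..a}. z (c - 1) - z c) = z 0 - z a"
    using sum_tele1[of "\<lambda>c. z (c - 1)" a] by simp
  also have "z 0 - z a = 1" using za unfolding z_def by simp
  finally show ?thesis by simp
next
  case False
  have na: "n 1 = a" using False VL_bound[OF n, of 1] a by auto
  have z: "n (Suc a) = 0" using VL_zero[OF n] by auto
  define phi where "phi x = (if 0 < x then Suc x else 0)" for x :: nat
  have T: "cs.TT [1..<a+1] n c = phi (n (Suc c))" if "c \<in> {1..a}" for c
    using TTL[OF n that] False unfolding XL_def phi_def by simp
  have pp: "psi (phi x) = psi x - real x" for x
    using psi_Suc[of x] unfolding phi_def by (auto simp: psi_def)
  have "gL n - gL (cs.TT [1..<a+1] n) = (\<Sum>c\<in>{1..a}. psi (n c) - psi (cs.TT [1..<a+1] n c))"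
    unfolding gL_def by (simp only: sum_subtractf)
  also have "\<dots> = (\<Sum>c\<in>{1..a}. (psi (n c) - psi (n (Suc c))) + real (n (Suc c)))"
    by (intro sum.cong refl) (subst T, assumption, simp add: pp)
  also have "\<dots> = psi (n 1) - psi (n (Suc a)) + (cs.F n - real (n 1) + real (n (Suc a)))"
    using sum_tele1[of "\<lambda>c. psi (n c)" a] sum_shift1[of "\<lambda>c. real (n c)" a]
    unfolding cs.F_def by (simp add: sum.distrib)
  also have "\<dots> = cs.F n - CL" using na z a unfolding psi_def CL_def by (simp add: field_simps)
  finally show ?thesis by simp
qed

lemma homL:
  assumes a: "a \<ge> 1"
  shows "HomC (VL a) (cs.TT [1..<a+1]) cs.F CL"
proof (rule coboundary_HomC[where g = gL])
  have s: "set [1..<a+1] \<subseteq> {1..a}" by auto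
  show "finite (VL a)" by (rule VL_finite)
  show "cs.TT [1..<a + 1] ` VL a \<subseteq> VL a" using cs.TT_in'[OF s] .
  show "inj_on (cs.TT [1..<a + 1]) (VL a)" using cs.TT_inj[OF s] .
  show "cs.F y - CL = gL y - gL (cs.TT [1..<a + 1] y)" if "y \<in> VL a" for y
    using cobL[OF that a] .
qed

end


theorem mainTheorem10:
  fixes a b :: nat and \<nu> :: "nat \<Rightarrow> nat" and P :: "(nat \<times> nat) set"
  assumes "a \<ge> 1" "b \<ge> 1"
    and "P = Qposet a b \<or> P = Lposet a"
    and "\<nu> permutes {1..a}"
  shows "homomesic (ideals P) (comotion P a \<nu>) (\<lambda>I. real (card I))"
proof -
  define w where "w = map \<nu> [1..<a+1]"
  have seta: "set [1..<a+1] = {1..a}" by auto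
  have dw: "distinct w" unfolding w_def
    using permutes_inj[OF assms(4)] by (simp add: distinct_map inj_on_subset)
  have sw: "set w = {1..a}" unfolding w_def using permutes_image[OF assms(4)] seta by simp
  have com: "comotion P a \<nu> = fold (\<lambda>c f. chain_toggle P (column P c) \<circ> f) w id"
    unfolding comotion_def w_def ..
  from assms(3) show ?thesis
  proof
    assume P: "P = Qposet a b"
    interpret cs: colsys a "UQ b" LoQ "VQ a b" by (rule colsysQ)
    have H: "HomC (VQ a b) (cs.TT w) cs.F (real a * real b / 2)"
      using cs.all_orders[OF homQ[OF assms(1)] dw sw] .
    have hV: "homomesic (VQ a b) (cs.TT w) cs.F"
      using HomC_homomesic[OF VQ_finite cs.TT_in' H] sw by simp
    show ?thesis
    proof (rule homomesic_transfer[where V="VQ a b" and T="cs.TT w" and d="decQ a" and F=cs.F])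
      show "cs.TT w ` VQ a b \<subseteq> VQ a b" using cs.TT_in' sw by simp
      show "inj_on (decQ a) (VQ a b)" by (rule decQ_inj)
      show "decQ a ` VQ a b = ideals P" using decQ_surj P by simp
      show "comotion P a \<nu> (decQ a y) = decQ a (cs.TT w y)" if "y \<in> VQ a b" for y
        unfolding com cs.TT_def
        by (rule fold_conj[where V="VQ a b"]) (use chainQ cs.tau_in sw that P in auto)
      show "real (card (decQ a y)) = cs.F y" for y unfolding cs.F_def by (rule card_decQ)
      show "homomesic (VQ a b) (cs.TT w) cs.F" by (rule hV)
    qed
  next
    assume P: "P = Lposet a"
    interpret cs: colsys a "UL a" LoL "VL a" by (rule colsysL)
    have H: "HomC (VL a) (cs.TT w) cs.F (CL a)"
      using cs.all_orders[OF homL[OF assms(1)] dw sw] .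
    have hV: "homomesic (VL a) (cs.TT w) cs.F"
      using HomC_homomesic[OF VL_finite cs.TT_in' H] sw by simp
    show ?thesis
    proof (rule homomesic_transfer[where V="VL a" and T="cs.TT w" and d="decL a" and F=cs.F])
      show "cs.TT w ` VL a \<subseteq> VL a" using cs.TT_in' sw by simp
      show "inj_on (decL a) (VL a)" by (rule decL_inj)
      show "decL a ` VL a = ideals P" using decL_surj P by simp
      show "comotion P a \<nu> (decL a y) = decL a (cs.TT w y)" if "y \<in> VL a" for y
        unfolding com cs.TT_def
        by (rule fold_conj[where V="VL a"]) (use chainL cs.tau_in sw that P in auto)
      show "real (card (decL a y)) = cs.F y" for y unfolding cs.F_def by (rule card_decL)
      show "homomesic (VL a) (cs.TT w) cs.F" by (rule hV)
    qed
  qed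
qed


end
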